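(* Let $\rho\in(-1,1)$ and let $\Sigma_\rho=\begin{pmatrix}1&\rho\\ \rho&1\end{pmatrix}$, $\Sigma_{-\rho}=\begin{pmatrix}1&-\rho\\ -\rho&1\end{pmatrix}$. Let $(X_1,Y_2)\sim \mathrm{N}(0,\Sigma_\rho)$ and $(X_2,Y_1)\sim\mathrm{N}(0,\Sigma_{-\rho})$, with the pair $(X_1,Y_2)$ independent of the pair $(X_2,Y_1)$. Then for any $w_1,w_2\ge 0$ with $w_1+w_2=1$, the random variable $w_1\frac{X_1}{Y_1}+w_2\frac{X_2}{Y_2}$ has the standard Cauchy distribution.
   Context: The standard Cauchy distribution is the distribution on $\mathbb{R}$ with density $\frac{1}{\pi(1+z^2)}$. $\mathrm{N}(0,\Sigma)$ denotes the centered bivariate normal distribution with covariance matrix $\Sigma$. *)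

theory Defs
  imports "HOL-Probability.Probability"
begin

text \<open>Density of the centered bivariate normal distribution N(0,Sigma) with covariance
  matrix Sigma = [[s11, s12], [s12, s22]] (assumed positive definite):
  f(x,y) = 1/(2 pi sqrt(det Sigma)) * exp(-1/2 * (x,y) Sigma^-1 (x,y)^T).\<close>
definition binormal_density :: "real \<Rightarrow> real \<Rightarrow> real \<Rightarrow> real \<times> real \<Rightarrow> real" where
  "binormal_density s11 s12 s22 = (\<lambda>(x, y).
     let d = s11 * s22 - s12\<^sup>2 in
     exp (- (s22 * x\<^sup>2 - 2 * s12 * x * y + s11 * y\<^sup>2) / (2 * d)) / (2 * pi * sqrt d))"

definition std_cauchy_density :: "real \<Rightarrow> real" where
  "std_cauchy_density z = 1 / (pi * (1 + z\<^sup>2))"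

end

theory Submission
  imports Defs
begin

definition Fc :: "real \<Rightarrow> real" where "Fc z = 1/2 + arctan z / pi"

abbreviation muC :: "real measure" where
  "muC \<equiv> density lborel (\<lambda>x. ennreal (std_cauchy_density x))"

lemma cd_nonneg: "0 \<le> std_cauchy_density x"
  unfolding std_cauchy_density_def by (simp add: add_pos_nonneg)

lemma cd_measurable[measurable]: "std_cauchy_density \<in> borel_measurable borel"
  unfolding std_cauchy_density_def by measurable

lemma cd_Ici: "(\<integral>\<^sup>+x. ennreal (std_cauchy_density x) * indicator {a..} x \<partial>lborel) = ennreal (1/2 - arctan a / pi)"
proof -
  have "(\<integral>\<^sup>+x. ennreal (std_cauchy_density x) * indicator {a..} x \<partial>lborel) = ennreal (1/2 - arctan a / pi)"
  proof (rule nn_integral_FTC_atLeast[where F="\<lambda>x. arctan x / pi"])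
    show "std_cauchy_density \<in> borel_measurable borel" by measurable
    fix x
    show "((\<lambda>x. arctan x / pi) has_real_derivative std_cauchy_density x) (at x)"
      proof -
        have "pi * pi + pi * (pi * x\<^sup>2) = pi * (pi + pi * x\<^sup>2)" by algebra
        moreover have "pi + pi * x\<^sup>2 > 0" by (simp add: add_pos_nonneg)
        ultimately have e: "pi / (pi * pi + pi * (pi * x\<^sup>2)) = 1 / (pi + pi * x\<^sup>2)" by simp
        have "((\<lambda>x. arctan x / pi) has_real_derivative 1 / (pi + pi * x\<^sup>2)) (at x)"
          by (auto intro!: derivative_eq_intros simp: field_simps e)
        then show ?thesis by (simp add: std_cauchy_density_def distrib_left)
      qed
    show "0 \<le> std_cauchy_density x" by (rule cd_nonneg)
  next
    have "((\<lambda>x. arctan x / pi) \<longlongrightarrow> (pi/2) / pi) at_top"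
      by (intro tendsto_divide tendsto_arctan_at_top tendsto_const) auto
    then show "((\<lambda>x. arctan x / pi) \<longlongrightarrow> 1/2) at_top" by simp
  qed
  then show ?thesis .
qed

lemma muC_Iic: "emeasure muC {..u} = ennreal (Fc u)"
proof -
  have "emeasure muC {..u} = (\<integral>\<^sup>+x. ennreal (std_cauchy_density x) * indicator {..u} x \<partial>lborel)"
    by (subst emeasure_density) auto
  also have "\<dots> = (\<integral>\<^sup>+x. ennreal (std_cauchy_density (0 + -1 * x)) * indicator {..u} (0 + -1*x) \<partial>lborel)"
    by (subst nn_integral_real_affine[where c="-1" and t=0]) auto
  also have "\<dots> = (\<integral>\<^sup>+x. ennreal (std_cauchy_density x) * indicator {-u..} x \<partial>lborel)"
    by (auto intro!: nn_integral_cong simp: std_cauchy_density_def indicator_def)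
  also have "\<dots> = ennreal (Fc u)"
    by (simp add: cd_Ici Fc_def arctan_minus)
  finally show ?thesis .
qed

lemma arctan_eqI:
  assumes "-(pi/2) < A" "A < pi/2" "sin A = z * cos A"
  shows "arctan z = A"
proof -
  have "cos A > 0" using assms by (intro cos_gt_zero_pi) auto
  then have "tan A = z" using assms(3) by (simp add: tan_def)
  then show ?thesis using arctan_tan[OF assms(1,2)] by simp
qed

lemma sqrt1p_pos: "sqrt (1 + x\<^sup>2) > 0"
  by (simp add: add_pos_nonneg)

lemma trig3:
  fixes x y w :: real
  defines "n \<equiv> sqrt (1+x\<^sup>2) * sqrt (1+y\<^sup>2) * sqrt (1+w\<^sup>2)"
  shows "sin (arctan x + arctan y - arctan w) * n = (x + y) - (1 - x*y)*w"
    and "cos (arctan x + arctan y - arctan w) * n = (1 - x*y) + (x + y)*w"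
proof -
  define p where "p = sqrt (1+x\<^sup>2)"
  define q where "q = sqrt (1+y\<^sup>2)"
  define r where "r = sqrt (1+w\<^sup>2)"
  have p: "p \<noteq> 0" "q \<noteq> 0" "r \<noteq> 0" unfolding p_def q_def r_def using sqrt1p_pos by (metis less_irrefl)+
  have e: "cos (arctan x) = 1/p" "sin (arctan x) = x/p" "cos (arctan y) = 1/q" "sin (arctan y) = y/q"
     "cos (arctan w) = 1/r" "sin (arctan w) = w/r"
    unfolding p_def q_def r_def by (simp_all add: cos_arctan sin_arctan)
  show "sin (arctan x + arctan y - arctan w) * n = (x + y) - (1 - x*y)*w"
    unfolding n_def p_def[symmetric] q_def[symmetric] r_def[symmetric]
    using p by (simp add: sin_diff sin_add cos_add e field_simps)
  show "cos (arctan x + arctan y - arctan w) * n = (1 - x*y) + (x + y)*w"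
    unfolding n_def p_def[symmetric] q_def[symmetric] r_def[symmetric]
    using p by (simp add: cos_diff sin_add cos_add e field_simps)
qed

lemma trig2:
  fixes x w :: real
  defines "n \<equiv> sqrt (1+x\<^sup>2) * sqrt (1+w\<^sup>2)"
  shows "sin (arctan x - arctan w) * n = x - w"
    and "cos (arctan x - arctan w) * n = 1 + x*w"
proof -
  define p where "p = sqrt (1+x\<^sup>2)"
  define r where "r = sqrt (1+w\<^sup>2)"
  have p: "p \<noteq> 0" "r \<noteq> 0" unfolding p_def r_def using sqrt1p_pos by (metis less_irrefl)+
  have e: "cos (arctan x) = 1/p" "sin (arctan x) = x/p" 
     "cos (arctan w) = 1/r" "sin (arctan w) = w/r"
    unfolding p_def r_def by (simp_all add: cos_arctan sin_arctan)
  show "sin (arctan x - arctan w) * n = x - w"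
    unfolding n_def p_def[symmetric] r_def[symmetric]
    using p by (simp add: sin_diff e field_simps)
  show "cos (arctan x - arctan w) * n = 1 + x*w"
    unfolding n_def p_def[symmetric] r_def[symmetric]
    using p by (simp add: cos_diff e field_simps)
qed

lemma Fc_pos: "0 < Fc z" and Fc_less1: "Fc z < 1"
proof -
  have "-(pi/2) < arctan z" "arctan z < pi/2" by (rule arctan_lbound, rule arctan_ubound)
  then have h1: "-1/2 < arctan z / pi" by (simp add: less_divide_eq)
  have h2: "arctan z / pi < 1/2" using arctan_ubound[of z] by (simp add: divide_less_eq)
  show "0 < Fc z" "Fc z < 1" unfolding Fc_def using h1 h2 by linarith+
qed

lemma sets_muC[simp, measurable_cong]: "sets muC = sets borel" by simp
lemma space_muC[simp]: "space muC = UNIV" by simp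

lemma muC_Ioi: "emeasure muC {v<..} = ennreal (1 - Fc v)"
proof -
  have "emeasure muC {v<..} = emeasure muC {v..}"
  proof (rule emeasure_eq_AE)
    have "AE x in lborel. x \<noteq> v" by (rule AE_lborel_singleton)
    then show "AE x in muC. (x \<in> {v<..}) = (x \<in> {v..})"
      by (subst AE_density) (auto elim!: eventually_mono)
  qed auto
  also have "\<dots> = (\<integral>\<^sup>+x. ennreal (std_cauchy_density x) * indicator {v..} x \<partial>lborel)"
    by (subst emeasure_density) auto
  also have "\<dots> = ennreal (1 - Fc v)" by (simp add: cd_Ici Fc_def)
  finally show ?thesis .
qed

lemma muC_space: "emeasure muC UNIV = 1"
proof -
  have "emeasure muC UNIV = emeasure muC ({..0} \<union> {0<..})"
    by (rule arg_cong[where f="emeasure muC"]) auto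
  also have "\<dots> = emeasure muC {..0} + emeasure muC {0<..}"
    by (rule plus_emeasure[symmetric]) auto
  also have "\<dots> = ennreal (Fc 0 + (1 - Fc 0))"
    using Fc_pos[of 0] Fc_less1[of 0] by (simp add: muC_Iic muC_Ioi ennreal_plus[symmetric] del: ennreal_plus)
  also have "\<dots> = 1" by simp
  finally show ?thesis .
qed

lemma prob_space_muC: "prob_space muC"
  by (rule prob_spaceI) (simp add: muC_space)

lemma real_distribution_muC: "real_distribution muC"
  unfolding real_distribution_def real_distribution_axioms_def using prob_space_muC by simp

lemma muC_finite: "emeasure muC A \<noteq> \<infinity>"
  using prob_space.emeasure_space_1[OF prob_space_muC]
  by (metis emeasure_space ennreal_one_neq_top infinity_ennreal_def neq_top_trans space_muC)

lemma muC_Ioc: assumes "v \<le> w" shows "emeasure muC {v<..w} = ennreal (Fc w - Fc v)"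
proof -
  have "{v<..w} = {..w} - {..v}" by auto
  then have "emeasure muC {v<..w} = emeasure muC ({..w} - {..v})" by simp
  also have "\<dots> = emeasure muC {..w} - emeasure muC {..v}"
    using assms by (intro emeasure_Diff muC_finite) auto
  also have "\<dots> = ennreal (Fc w - Fc v)"
    by (simp add: muC_Iic ennreal_minus less_imp_le[OF Fc_pos])
  finally show ?thesis .
qed

lemma muC_eq_AE:
  assumes "A \<in> sets borel" "B \<in> sets borel" "\<And>x. x \<noteq> p \<Longrightarrow> x \<in> A \<longleftrightarrow> x \<in> B"
  shows "emeasure muC A = emeasure muC B"
proof (rule emeasure_eq_AE)
  have "AE x in lborel. x \<noteq> p" by (rule AE_lborel_singleton)
  then show "AE x in muC. (x \<in> A) = (x \<in> B)"
    using assms(3) by (subst AE_density) (auto elim!: eventually_mono)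
qed (use assms in auto)

lemma mob_pos:
  fixes c s z :: real
  assumes s: "s > 0"
  shows "emeasure muC {u. (c * u+s)/(c - s * u) \<le> z} = ennreal (Fc z)"
proof -
  define u0 where "u0 = c/s"
  define kk where "kk = c + z * s"
  define pp where "pp = z * c - s"
  have n: "c\<^sup>2 + s\<^sup>2 > 0" using s by (simp add: add_nonneg_pos)
  have lt: "u < u0 \<longleftrightarrow> c - s * u > 0" for u using s by (auto simp: u0_def field_simps)
  have gt: "u > u0 \<longleftrightarrow> c - s * u < 0" for u using s by (auto simp: u0_def field_simps)
  have key: "(c * u+s)/(c - s * u) \<le> z \<longleftrightarrow> (kk * u - pp)/(c - s * u) \<le> 0" if "u \<noteq> u0" for u
  proof -
    have d: "c - s * u \<noteq> 0" using that lt gt by (metis linorder_neqE_linordered_idom less_irrefl)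
    have "(c * u+s)/(c - s * u) - z = (kk * u - pp)/(c - s * u)"
      using d by (simp add: kk_def pp_def field_simps)
    then show ?thesis by (metis diff_le_0_iff_le)
  qed
  have meas: "{u. (c * u+s)/(c - s * u) \<le> z} \<in> sets borel" by measurable
  have iden: "1 + us * u0 = z * (u0 - us)" if "us = pp/kk" "kk \<noteq> 0" for us
    using that s by (simp add: u0_def pp_def kk_def field_simps)
  consider (pos) "kk > 0" | (neg) "kk < 0" | (zero) "kk = 0" by linarith
  then show ?thesis
  proof cases
    case pos
    define us where "us = pp/kk"
    have "u0 - us = (c\<^sup>2 + s\<^sup>2)/(s * kk)"
      using s pos by (simp add: us_def u0_def pp_def kk_def field_simps) (simp add: algebra_simps power2_eq_square)
    also have "\<dots> > 0" using n s pos by simp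
    finally have slt: "us < u0" by simp
    have "emeasure muC {u. (c * u+s)/(c - s * u) \<le> z} = emeasure muC ({..us} \<union> {u0<..})"
    proof (rule muC_eq_AE[where p=u0])
      fix u assume ne: "u \<noteq> u0"
      show "u \<in> {u. (c * u+s)/(c - s * u) \<le> z} \<longleftrightarrow> u \<in> {..us} \<union> {u0<..}"
      proof (cases "u < u0")
        case True
        then have "c - s * u > 0" using lt by simp
        then have "(c * u+s)/(c - s * u) \<le> z \<longleftrightarrow> kk * u \<le> pp" using key[OF ne] by (simp add: divide_le_0_iff)
        also have "\<dots> \<longleftrightarrow> u \<le> us" using pos by (simp add: us_def pos_le_divide_eq mult.commute)
        finally show ?thesis using True by auto
      next
        case False
        then have F: "u > u0" using ne by simp
        then have "c - s * u < 0" using gt by simp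
        then have "(c * u+s)/(c - s * u) \<le> z \<longleftrightarrow> kk * u \<ge> pp" using key[OF ne] by (simp add: divide_le_0_iff)
        also have "\<dots> \<longleftrightarrow> u \<ge> us" using pos by (simp add: us_def pos_divide_le_eq mult.commute)
        finally show ?thesis using F slt by auto
      qed
    qed (use meas in auto)
    also have "\<dots> = emeasure muC {..us} + emeasure muC {u0<..}"
      using slt by (intro plus_emeasure[symmetric]) auto
    also have "\<dots> = ennreal (Fc us + (1 - Fc u0))"
      using Fc_pos[of us] Fc_less1[of u0] by (simp add: muC_Iic muC_Ioi ennreal_plus[symmetric] del: ennreal_plus)
    also have "Fc us + (1 - Fc u0) = Fc z"
    proof -
      define A where "A = arctan us - arctan u0 + pi/2"
      have "arctan us < arctan u0" using slt by (simp add: arctan_less_iff)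
      moreover have "-(pi/2) < arctan us" "arctan u0 < pi/2" by (rule arctan_lbound, rule arctan_ubound)
      ultimately have r: "-(pi/2) < A" "A < pi/2" unfolding A_def by linarith+
      define nn where "nn = sqrt (1+us\<^sup>2) * sqrt (1+u0\<^sup>2)"
      have nn: "nn > 0" unfolding nn_def using sqrt1p_pos by (intro mult_pos_pos) auto
      have "sin A * nn = 1 + us * u0" "cos A * nn = -(us - u0)"
        using trig2[of us u0] unfolding A_def nn_def by (simp_all add: sin_add cos_add)
      then have "sin A * nn = z * (cos A * nn)" using iden[OF us_def] pos by simp
      then have "sin A = z * cos A" using nn by simp
      then have "arctan z = A" using r by (intro arctan_eqI) auto
      moreover have "Fc us + (1 - Fc u0) - Fc z = (arctan us - arctan u0 + pi/2 - arctan z)/pi"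
        unfolding Fc_def by (simp add: field_simps)
      ultimately show ?thesis unfolding A_def by simp
    qed
    finally show ?thesis .
  next
    case neg
    define us where "us = pp/kk"
    have "u0 - us = (c\<^sup>2 + s\<^sup>2)/(s * kk)"
      using s neg by (simp add: us_def u0_def pp_def kk_def field_simps) (simp add: algebra_simps power2_eq_square)
    also have "\<dots> < 0" using n s neg by (simp add: divide_pos_neg mult_pos_neg)
    finally have slt: "u0 < us" by simp
    have "emeasure muC {u. (c * u+s)/(c - s * u) \<le> z} = emeasure muC {u0<..us}"
    proof (rule muC_eq_AE[where p=u0])
      fix u assume ne: "u \<noteq> u0"
      show "u \<in> {u. (c * u+s)/(c - s * u) \<le> z} \<longleftrightarrow> u \<in> {u0<..us}"
      proof (cases "u < u0")
        case True
        then have "c - s * u > 0" using lt by simp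
        then have "(c * u+s)/(c - s * u) \<le> z \<longleftrightarrow> kk * u \<le> pp" using key[OF ne] by (simp add: divide_le_0_iff)
        also have "\<dots> \<longleftrightarrow> u \<ge> us" using neg by (simp add: us_def neg_divide_le_eq mult.commute)
        finally show ?thesis using True slt by auto
      next
        case False
        then have F: "u > u0" using ne by simp
        then have "c - s * u < 0" using gt by simp
        then have "(c * u+s)/(c - s * u) \<le> z \<longleftrightarrow> kk * u \<ge> pp" using key[OF ne] by (simp add: divide_le_0_iff)
        also have "\<dots> \<longleftrightarrow> u \<le> us" using neg by (simp add: us_def neg_le_divide_eq mult.commute)
        finally show ?thesis using F by auto
      qed
    qed (use meas in auto)
    also have "\<dots> = ennreal (Fc us - Fc u0)" using slt by (simp add: muC_Ioc)
    also have "Fc us - Fc u0 = Fc z"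
    proof -
      define A where "A = arctan us - arctan u0 - pi/2"
      have "arctan u0 < arctan us" using slt by (simp add: arctan_less_iff)
      moreover have "-(pi/2) < arctan u0" "arctan us < pi/2" by (rule arctan_lbound, rule arctan_ubound)
      ultimately have r: "-(pi/2) < A" "A < pi/2" unfolding A_def by linarith+
      define nn where "nn = sqrt (1+us\<^sup>2) * sqrt (1+u0\<^sup>2)"
      have nn: "nn > 0" unfolding nn_def using sqrt1p_pos by (intro mult_pos_pos) auto
      have sc: "sin A = - cos (arctan us - arctan u0)" "cos A = sin (arctan us - arctan u0)"
        unfolding A_def by (simp_all add: sin_diff cos_diff)
      have h: "sin A * nn = -(1 + us * u0)" "cos A * nn = us - u0"
        using trig2[of us u0] unfolding sc nn_def by simp_all
      have e: "1 + us * u0 = z * (u0 - us)" using iden[OF us_def] neg by simp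
      have "sin A * nn = -(z * (u0 - us))" using h(1) e by simp
      also have "\<dots> = z * (us - u0)" by algebra
      finally have "sin A * nn = z * (cos A * nn)" using h(2) by simp
      then have "sin A = z * cos A" using nn by simp
      then have "arctan z = A" using r by (intro arctan_eqI) auto
      moreover have "Fc us - Fc u0 - Fc z = (arctan us - arctan u0 - pi/2 - arctan z)/pi"
        unfolding Fc_def by (simp add: field_simps)
      ultimately show ?thesis unfolding A_def by simp
    qed
    finally show ?thesis .
  next
    case zero
    have zz: "z = -u0" using zero s unfolding kk_def u0_def by (simp add: field_simps)
    have Pneg: "pp < 0"
    proof -
      have "pp = -(c\<^sup>2 + s\<^sup>2)/s" using zz s unfolding pp_def u0_def by (simp add: field_simps power2_eq_square)
      then show ?thesis using n s by (simp add: divide_neg_pos)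
    qed
    have "emeasure muC {u. (c * u+s)/(c - s * u) \<le> z} = emeasure muC {u0<..}"
    proof (rule muC_eq_AE[where p=u0])
      fix u assume ne: "u \<noteq> u0"
      show "u \<in> {u. (c * u+s)/(c - s * u) \<le> z} \<longleftrightarrow> u \<in> {u0<..}"
      proof (cases "u < u0")
        case True
        then have "c - s * u > 0" using lt by simp
        then show ?thesis using key[OF ne] zero Pneg True by (simp add: divide_le_0_iff zero_le_divide_iff)
      next
        case False
        then have F: "u > u0" using ne by simp
        then have "c - s * u < 0" using gt by simp
        then show ?thesis using key[OF ne] zero Pneg F by (simp add: divide_le_0_iff zero_le_divide_iff)
      qed
    qed (use meas in auto)
    also have "\<dots> = ennreal (Fc z)" by (simp add: muC_Ioi zz Fc_def arctan_minus)
    finally show ?thesis .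
  qed
qed

lemma pos_mult_nonneg_iff: "(k::real) > 0 \<Longrightarrow> 0 \<le> k * X \<longleftrightarrow> 0 \<le> X" by (simp add: zero_le_mult_iff)
lemma pos_mult_nonpos_iff: "(k::real) > 0 \<Longrightarrow> k * X \<le> 0 \<longleftrightarrow> X \<le> 0" by (simp add: mult_le_0_iff)

lemma quad_pos:
  fixes a b c s z :: real
  assumes a: "a > 0" and b: "b > 0" and ab: "a + b = 1" and s: "s > 0"
  shows "emeasure muC {u. a * u + b * ((c * u + s)/(c - s * u)) \<le> z} = ennreal (Fc z)"
proof -
  define u0 where "u0 = c / s"
  define kk where "kk = c + z * s"
  define pp where "pp = z * c - b * s"
  define Q where "Q u = a * s * u\<^sup>2 - kk * u + pp" for u
  have n: "c\<^sup>2 + s\<^sup>2 > 0" using s by (simp add: add_nonneg_pos)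
  have as: "a * s > 0" using a s by simp
  have b1: "b = 1 - a" using ab by simp
  have nz: "a \<noteq> 0" "s \<noteq> 0" using a s by simp_all
  have lt: "u < u0 \<longleftrightarrow> c - s * u > 0" for u using s by (auto simp: u0_def field_simps)
  have gt: "u > u0 \<longleftrightarrow> c - s * u < 0" for u using s by (auto simp: u0_def field_simps)
  have key: "a * u + b * ((c * u + s)/(c - s * u)) \<le> z \<longleftrightarrow> (- Q u)/(c - s * u) \<le> 0" if "u \<noteq> u0" for u
  proof -
    have d: "c - s * u \<noteq> 0" using that lt gt by (metis linorder_neqE_linordered_idom less_irrefl)
    have "a * u + b * ((c * u + s)/(c - s * u)) - z = (- Q u)/(c - s * u)"
      using d by (simp add: b1 Q_def kk_def pp_def field_simps power2_eq_square; simp add: algebra_simps)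
    then show ?thesis by (metis diff_le_0_iff_le)
  qed
  have meas: "{u. a * u + b * ((c * u + s)/(c - s * u)) \<le> z} \<in> sets borel" by measurable
  have Qu0: "Q u0 = - b * (c\<^sup>2 + s\<^sup>2) / s"
    using s by (simp add: b1 Q_def u0_def kk_def pp_def field_simps power2_eq_square; simp add: algebra_simps)
  have Qu0neg: "Q u0 < 0" using Qu0 b n s by (simp add: divide_neg_pos)
  define D where "D = kk\<^sup>2 - 4 * a * s * pp"
  have "D = (2 * a * s * u0 - kk)\<^sup>2 - 4 * (a * s) * Q u0"
    by (simp add: D_def Q_def power2_eq_square algebra_simps)
  moreover have "0 \<le> (2 * a * s * u0 - kk)\<^sup>2" by simp
  moreover have "4 * (a * s) * Q u0 < 0" using as Qu0neg by (simp add: mult_pos_neg)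
  ultimately have Dpos: "D > 0" by linarith
  define r where "r = sqrt D"
  define u1 where "u1 = (kk - r) / (2 * a * s)"
  define u2 where "u2 = (kk + r) / (2 * a * s)"
  have sD: "r > 0" "r\<^sup>2 = D" "r * r = D" using Dpos by (simp_all add: r_def flip: power2_eq_square)
  have Qf: "Q u = a * s * ((u - u1) * (u - u2))" for u
  proof -
    have "a * s * ((u - u1) * (u - u2)) = a * s * u\<^sup>2 - kk * u + (kk\<^sup>2 - r\<^sup>2) / (4 * a * s)"
      using as nz by (simp add: u1_def u2_def field_simps power2_eq_square; simp add: algebra_simps)
    also have "\<dots> = Q u" using as nz by (simp add: sD D_def Q_def field_simps power2_eq_square)
    finally show ?thesis by simp
  qed
  have u12: "u1 < u2" using sD as by (simp add: u1_def u2_def divide_strict_right_mono)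
  have "(u0 - u1) * (u0 - u2) < 0"
  proof (rule ccontr)
    assume "\<not> (u0 - u1) * (u0 - u2) < 0"
    then have "0 \<le> a * s * ((u0 - u1) * (u0 - u2))" using as by simp
    then show False using Qf[of u0] Qu0neg by simp
  qed
  then have o1: "u1 < u0" and o2: "u0 < u2" using u12 by (auto simp: mult_less_0_iff)
  have sum12: "u1 + u2 = kk / (a * s)" using as nz by (simp add: u1_def u2_def field_simps)
  have prod12: "u1 * u2 = pp / (a * s)"
  proof -
    have "u1 * u2 = (kk\<^sup>2 - r\<^sup>2) / (4 * (a * s)\<^sup>2)"
      using as nz by (simp add: u1_def u2_def field_simps power2_eq_square; simp add: algebra_simps)
    also have "\<dots> = pp / (a * s)" using as nz by (simp add: sD D_def field_simps power2_eq_square)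
    finally show ?thesis .
  qed
  have "emeasure muC {u. a * u + b * ((c * u + s)/(c - s * u)) \<le> z} = emeasure muC ({..u1} \<union> {u0<..u2})"
  proof (rule muC_eq_AE[where p=u0])
    fix u assume ne: "u \<noteq> u0"
    show "u \<in> {u. a * u + b * ((c * u + s)/(c - s * u)) \<le> z} \<longleftrightarrow> u \<in> {..u1} \<union> {u0<..u2}"
    proof (cases "u < u0")
      case True
      then have "c - s * u > 0" using lt by simp
      then have s1: "(- Q u)/(c - s * u) \<le> 0 \<longleftrightarrow> 0 \<le> Q u" by (auto simp: divide_le_0_iff zero_le_divide_iff)
      have s2: "0 \<le> Q u \<longleftrightarrow> 0 \<le> (u - u1) * (u - u2)" unfolding Qf by (rule pos_mult_nonneg_iff[OF as])
      have "a * u + b * ((c * u + s)/(c - s * u)) \<le> z \<longleftrightarrow> 0 \<le> (u - u1) * (u - u2)"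
        using key[OF ne] s1 s2 by simp
      also have "\<dots> \<longleftrightarrow> u \<le> u1" using True o2 by (auto simp: zero_le_mult_iff)
      finally show ?thesis using True o1 by auto
    next
      case False
      then have F: "u > u0" using ne by simp
      then have "c - s * u < 0" using gt by simp
      then have s1: "(- Q u)/(c - s * u) \<le> 0 \<longleftrightarrow> Q u \<le> 0" by (auto simp: divide_le_0_iff zero_le_divide_iff)
      have s2: "Q u \<le> 0 \<longleftrightarrow> (u - u1) * (u - u2) \<le> 0" unfolding Qf by (rule pos_mult_nonpos_iff[OF as])
      have "a * u + b * ((c * u + s)/(c - s * u)) \<le> z \<longleftrightarrow> (u - u1) * (u - u2) \<le> 0"
        using key[OF ne] s1 s2 by simp
      also have "\<dots> \<longleftrightarrow> u \<le> u2" using F o1 by (auto simp: mult_le_0_iff)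
      finally show ?thesis using F o1 by auto
    qed
  qed (use meas in auto)
  also have "\<dots> = emeasure muC {..u1} + emeasure muC {u0<..u2}"
    using o1 by (intro plus_emeasure[symmetric]) auto
  also have "\<dots> = ennreal (Fc u1 + (Fc u2 - Fc u0))"
  proof -
    have "Fc u0 \<le> Fc u2" using o2 by (simp add: Fc_def divide_right_mono arctan_le_iff)
    then show ?thesis
      using Fc_pos[of u1] o2 by (simp add: muC_Iic muC_Ioc ennreal_plus[symmetric] del: ennreal_plus)
  qed
  also have "Fc u1 + (Fc u2 - Fc u0) = Fc z"
  proof -
    define A where "A = arctan u1 + arctan u2 - arctan u0"
    have "arctan u1 < arctan u0" "arctan u0 < arctan u2" using o1 o2 by (simp_all add: arctan_less_iff)
    moreover have "-(pi/2) < arctan u1" "arctan u1 < pi/2" "-(pi/2) < arctan u2" "arctan u2 < pi/2"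
      by (rule arctan_lbound arctan_ubound)+
    ultimately have r: "-(pi/2) < A" "A < pi/2" unfolding A_def by linarith+
    define nn where "nn = sqrt (1+u1\<^sup>2) * sqrt (1+u2\<^sup>2) * sqrt (1+u0\<^sup>2)"
    have nn: "nn > 0" unfolding nn_def using sqrt1p_pos by (intro mult_pos_pos) auto
    have h: "sin A * nn = (u1 + u2) - (1 - u1 * u2) * u0" "cos A * nn = (1 - u1 * u2) + (u1 + u2) * u0"
      using trig3[of u1 u2 u0] unfolding A_def nn_def by simp_all
    have e: "(u1 + u2) - (1 - u1 * u2) * u0 = z * ((1 - u1 * u2) + (u1 + u2) * u0)"
      unfolding sum12 prod12 using as s nz
      by (simp add: b1 u0_def kk_def pp_def field_simps; simp add: algebra_simps power2_eq_square)
    have "sin A * nn = z * (cos A * nn)" using h e by simp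
    then have "sin A = z * cos A" using nn by simp
    then have "arctan z = A" using r by (intro arctan_eqI) auto
    moreover have "Fc u1 + (Fc u2 - Fc u0) - Fc z = (arctan u1 + arctan u2 - arctan u0 - arctan z)/pi"
      unfolding Fc_def by (simp add: field_simps)
    ultimately show ?thesis unfolding A_def by simp
  qed
  finally show ?thesis .
qed

lemma cauchy_pick_pos:
  fixes a b c s z :: real
  assumes a: "a \<ge> 0" and b: "b \<ge> 0" and ab: "a + b = 1" and s: "s > 0"
  shows "emeasure muC {u. a * u + b * ((c * u + s)/(c - s * u)) \<le> z} = ennreal (Fc z)"
proof -
  consider "b = 0" | "a = 0" | "a > 0" "b > 0" using a b by linarith
  then show ?thesis
  proof cases
    case 1
    then have "{u. a * u + b * ((c * u + s)/(c - s * u)) \<le> z} = {..z}" using ab by auto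
    then show ?thesis by (simp add: muC_Iic)
  next
    case 2
    then have "{u. a * u + b * ((c * u + s)/(c - s * u)) \<le> z} = {u. (c * u + s)/(c - s * u) \<le> z}" using ab by auto
    then show ?thesis using mob_pos[OF s] by simp
  next
    case 3
    then show ?thesis using quad_pos[OF 3 ab s] by simp
  qed
qed

lemma cauchy_pick:
  fixes a b c s z :: real
  assumes a: "a \<ge> 0" and b: "b \<ge> 0" and ab: "a + b = 1" and cs: "c \<noteq> 0 \<or> s \<noteq> 0"
  shows "emeasure muC {u. a * u + b * ((c * u + s)/(c - s * u)) \<le> z} = ennreal (Fc z)"
proof -
  consider "s = 0" | "s > 0" | "s < 0" by linarith
  then show ?thesis
  proof cases
    case 1
    then have "c \<noteq> 0" using cs by simp
    then have m: "(c * u + s)/(c - s * u) = u" for u using 1 by simp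
    have l: "a * u + b * u = u" for u using ab by (simp add: distrib_right[symmetric])
    have "{u. a * u + b * ((c * u + s)/(c - s * u)) \<le> z} = {..z}"
      by (auto simp: m l)
    then show ?thesis by (simp add: muC_Iic)
  next
    case 2 then show ?thesis by (rule cauchy_pick_pos[OF a b ab])
  next
    case 3
    have e: "(c * u + s)/(c - s * u) = ((-c) * u + (-s))/((-c) - (-s) * u)" for u
    proof -
      have "(-c) * u + (-s) = -(c * u + s)" "(-c) - (-s) * u = -(c - s * u)" by simp_all
      then show ?thesis by (simp only: minus_divide_divide)
    qed
    have "-s > 0" using 3 by simp
    from cauchy_pick_pos[OF a b ab this, of "-c" z] show ?thesis by (simp only: e)
  qed
qed

lemma mob_distr:
  fixes c s :: real
  assumes cs: "c \<noteq> 0 \<or> s \<noteq> 0"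
  shows "distr muC borel (\<lambda>u. (c * u + s)/(c - s * u)) = muC"
proof (rule cdf_unique)
  show "real_distribution (distr muC borel (\<lambda>u. (c * u + s)/(c - s * u)))"
    apply (rule prob_space.real_distribution_distr[OF prob_space_muC])
    apply (subst measurable_cong_sets[OF sets_muC refl])
    apply measurable
    done
  show "real_distribution muC" by (rule real_distribution_muC)
  show "cdf (distr muC borel (\<lambda>u. (c * u + s)/(c - s * u))) = cdf muC"
  proof
    fix x
    have "emeasure (distr muC borel (\<lambda>u. (c * u + s)/(c - s * u))) {..x} =
          emeasure muC {u. 0 * u + 1 * ((c * u + s)/(c - s * u)) \<le> x}"
      by (subst emeasure_distr) (auto intro!: arg_cong[where f="emeasure muC"])
    also have "\<dots> = ennreal (Fc x)" by (rule cauchy_pick) (use cs in auto)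
    finally have 1: "emeasure (distr muC borel (\<lambda>u. (c * u + s)/(c - s * u))) {..x} = ennreal (Fc x)" .
    show "cdf (distr muC borel (\<lambda>u. (c * u + s)/(c - s * u))) x = cdf muC x"
      unfolding cdf_def using 1 muC_Iic[of x] Fc_pos[of x]
      by (simp add: measure_def)
  qed
qed

lemma div_div_same: "(d::real) \<noteq> 0 \<Longrightarrow> (p / d) / (q / d) = p / q"
  by (cases "q = 0") (simp_all add: field_simps)

lemma inner:
  fixes a b x1 y1 x2 y2 z :: real
  assumes a: "a \<ge> 0" and b: "b \<ge> 0" and ab: "a + b = 1"
    and v1: "x1 \<noteq> 0 \<or> y1 \<noteq> 0" and v2: "x2 \<noteq> 0 \<or> y2 \<noteq> 0"
  shows "emeasure muC {t. a * ((x1 + t * y1)/(y1 - t * x1)) + b * ((x2 + t * y2)/(y2 - t * x2)) \<le> z} = ennreal (Fc z)"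
proof -
  define C where "C = y1 * y2 + x1 * x2"
  define S where "S = x2 * y1 - x1 * y2"
  define m1 where "m1 t = (y1 * t + x1)/(y1 - x1 * t)" for t
  define n where "n = x1\<^sup>2 + y1\<^sup>2"
  have n: "n > 0" using v1 unfolding n_def by (auto simp: add_pos_nonneg add_nonneg_pos)
  have n2: "x2\<^sup>2 + y2\<^sup>2 > 0" using v2 by (auto simp: add_pos_nonneg add_nonneg_pos)
  have "C\<^sup>2 + S\<^sup>2 = n * (x2\<^sup>2 + y2\<^sup>2)" unfolding C_def S_def n_def by algebra
  then have "C\<^sup>2 + S\<^sup>2 > 0" using n n2 by simp
  then have CS: "C \<noteq> 0 \<or> S \<noteq> 0" by auto
  have comp: "(x2 + t * y2)/(y2 - t * x2) = (C * m1 t + S)/(C - S * m1 t)" if d: "y1 - x1 * t \<noteq> 0" for t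
  proof -
    have e1: "C * m1 t + S = (n * (x2 + t * y2)) / (y1 - x1 * t)"
    proof -
      have "C * m1 t + S = (C * (y1 * t + x1) + S * (y1 - x1 * t)) / (y1 - x1 * t)"
        using d by (simp add: m1_def field_simps)
      also have "C * (y1 * t + x1) + S * (y1 - x1 * t) = n * (x2 + t * y2)"
        unfolding C_def S_def n_def by algebra
      finally show ?thesis .
    qed
    have e2: "C - S * m1 t = (n * (y2 - t * x2)) / (y1 - x1 * t)"
    proof -
      have "C - S * m1 t = (C * (y1 - x1 * t) - S * (y1 * t + x1)) / (y1 - x1 * t)"
        using d by (simp add: m1_def field_simps)
      also have "C * (y1 - x1 * t) - S * (y1 * t + x1) = n * (y2 - t * x2)"
        unfolding C_def S_def n_def by algebra
      finally show ?thesis .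
    qed
    show ?thesis unfolding e1 e2 div_div_same[OF d] using n by simp
  qed
  have m1e: "(x1 + t * y1)/(y1 - t * x1) = m1 t" for t unfolding m1_def by (simp add: algebra_simps)
  define H where "H s = a * s + b * ((C * s + S)/(C - S * s))" for s
  have m1meas: "m1 \<in> borel_measurable borel" unfolding m1_def by measurable
  have m1meas': "m1 \<in> borel_measurable muC" using m1meas by (simp add: measurable_cong_sets[OF sets_muC refl])
  have dist: "emeasure muC {t. H (m1 t) \<le> z} = emeasure (distr muC borel m1) {s. H s \<le> z}"
    using m1meas' by (subst emeasure_distr) (auto simp: H_def m1_def intro!: arg_cong[where f="emeasure muC"])
  have "emeasure muC {t. a * ((x1 + t * y1)/(y1 - t * x1)) + b * ((x2 + t * y2)/(y2 - t * x2)) \<le> z}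
      = emeasure muC {t. H (m1 t) \<le> z}"
  proof (rule muC_eq_AE[where p="y1/x1"])
    fix t assume "t \<noteq> y1 / x1"
    then have "y1 - x1 * t \<noteq> 0" using v1 by (cases "x1 = 0") (auto simp: field_simps)
    then have c: "(x2 + t * y2)/(y2 - t * x2) = (C * m1 t + S)/(C - S * m1 t)" by (rule comp)
    show "t \<in> {t. a * ((x1 + t * y1)/(y1 - t * x1)) + b * ((x2 + t * y2)/(y2 - t * x2)) \<le> z}
      \<longleftrightarrow> t \<in> {t. H (m1 t) \<le> z}"
      unfolding mem_Collect_eq H_def c m1e by (rule refl)
  qed (auto simp: H_def m1_def)
  also note dist
  also have "distr muC borel m1 = muC"
    unfolding m1_def by (rule mob_distr) (use v1 in auto)
  also have "emeasure muC {s. H s \<le> z} = ennreal (Fc z)"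
    unfolding H_def by (rule cauchy_pick[OF a b ab CS])
  finally show ?thesis .
qed

lemma shear_x:
  fixes h :: "real \<times> real \<Rightarrow> ennreal"
  assumes [measurable]: "h \<in> borel_measurable (lborel \<Otimes>\<^sub>M lborel)"
  shows "(\<integral>\<^sup>+x. \<integral>\<^sup>+y. h (x + k * y, y) \<partial>lborel \<partial>lborel) = (\<integral>\<^sup>+x. \<integral>\<^sup>+y. h (x, y) \<partial>lborel \<partial>lborel)"
proof -
  have "(\<integral>\<^sup>+x. \<integral>\<^sup>+y. h (x + k * y, y) \<partial>lborel \<partial>lborel) = (\<integral>\<^sup>+y. \<integral>\<^sup>+x. h (x + k * y, y) \<partial>lborel \<partial>lborel)"
    by (rule lborel_pair.Fubini'[symmetric]) measurable
  also have "\<dots> = (\<integral>\<^sup>+y. \<integral>\<^sup>+x. h (x, y) \<partial>lborel \<partial>lborel)"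
  proof (rule nn_integral_cong)
    fix y :: real
    have "(\<integral>\<^sup>+x. h (x, y) \<partial>lborel) = ennreal \<bar>1\<bar> * (\<integral>\<^sup>+x. h (k * y + 1 * x, y) \<partial>lborel)"
      by (rule nn_integral_real_affine) auto
    then show "(\<integral>\<^sup>+x. h (x + k * y, y) \<partial>lborel) = (\<integral>\<^sup>+x. h (x, y) \<partial>lborel)"
      by (simp add: add.commute)
  qed
  also have "\<dots> = (\<integral>\<^sup>+x. \<integral>\<^sup>+y. h (x, y) \<partial>lborel \<partial>lborel)"
    by (rule lborel_pair.Fubini') measurable
  finally show ?thesis .
qed

lemma shear_y:
  fixes h :: "real \<times> real \<Rightarrow> ennreal"
  assumes [measurable]: "h \<in> borel_measurable (lborel \<Otimes>\<^sub>M lborel)"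
  shows "(\<integral>\<^sup>+x. \<integral>\<^sup>+y. h (x, y + k * x) \<partial>lborel \<partial>lborel) = (\<integral>\<^sup>+x. \<integral>\<^sup>+y. h (x, y) \<partial>lborel \<partial>lborel)"
proof (rule nn_integral_cong)
  fix x :: real
  have "(\<integral>\<^sup>+y. h (x, y) \<partial>lborel) = ennreal \<bar>1\<bar> * (\<integral>\<^sup>+y. h (x, k * x + 1 * y) \<partial>lborel)"
    by (rule nn_integral_real_affine) auto
  then show "(\<integral>\<^sup>+y. h (x, y + k * x) \<partial>lborel) = (\<integral>\<^sup>+y. h (x, y) \<partial>lborel)"
    by (simp add: add.commute)
qed

lemma rot_inv:
  fixes h :: "real \<times> real \<Rightarrow> ennreal" and C S :: real
  assumes [measurable]: "h \<in> borel_measurable (lborel \<Otimes>\<^sub>M lborel)"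
  assumes CS: "C\<^sup>2 + S\<^sup>2 = 1" and C: "C > -1"
  shows "(\<integral>\<^sup>+x. \<integral>\<^sup>+y. h (C * x + S * y, - S * x + C * y) \<partial>lborel \<partial>lborel) = (\<integral>\<^sup>+x. \<integral>\<^sup>+y. h (x, y) \<partial>lborel \<partial>lborel)"
proof -
  define k1 where "k1 = S / (1 + C)"
  define k2 where "k2 = - S"
  have C1: "1 + C \<noteq> 0" using C by simp
  have f1: "k1 * k2 = C - 1"
  proof -
    have "S\<^sup>2 = (1 - C) * (1 + C)" using CS by (simp add: algebra_simps power2_eq_square)
    then have "k1 * k2 = - ((1 - C) * (1 + C)) / (1 + C)" unfolding k1_def k2_def by (simp add: power2_eq_square)
    also have "\<dots> = C - 1" using C1 by simp
    finally show ?thesis .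
  qed
  have f2: "k1 * (1 + C) = S" unfolding k1_def using C1 by simp
  have e1: "(x + k1 * y) + k1 * (y + k2 * (x + k1 * y)) = C * x + S * y" for x y
  proof -
    have "(x + k1 * y) + k1 * (y + k2 * (x + k1 * y)) = x * (1 + k1 * k2) + y * (k1 * (2 + k1 * k2))" by algebra
    also have "\<dots> = C * x + S * y" unfolding f1 using f2 by (simp add: algebra_simps)
    finally show ?thesis .
  qed
  have e2: "y + k2 * (x + k1 * y) = - S * x + C * y" for x y
  proof -
    have "y + k2 * (x + k1 * y) = k2 * x + y * (1 + k1 * k2)" by algebra
    also have "\<dots> = - S * x + C * y" by (simp only: f1) (simp add: k2_def)
    finally show ?thesis .
  qed
  define g1 where "g1 p = h (fst p + k1 * snd p, snd p)" for p
  define g2 where "g2 p = g1 (fst p, snd p + k2 * fst p)" for p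
  have [measurable]: "g1 \<in> borel_measurable (lborel \<Otimes>\<^sub>M lborel)" unfolding g1_def by measurable
  have [measurable]: "g2 \<in> borel_measurable (lborel \<Otimes>\<^sub>M lborel)" unfolding g2_def by measurable
  have "(\<integral>\<^sup>+x. \<integral>\<^sup>+y. h (C * x + S * y, - S * x + C * y) \<partial>lborel \<partial>lborel)
      = (\<integral>\<^sup>+x. \<integral>\<^sup>+y. g2 (x + k1 * y, y) \<partial>lborel \<partial>lborel)"
  proof -
    have e1': "(x + k1 * y) + k1 * (- S * x + C * y) = C * x + S * y" for x y
      by (subst e2[where x=x and y=y, symmetric]) (rule e1)
    show ?thesis unfolding g2_def g1_def fst_conv snd_conv e2 e1' ..
  qed
  also have "\<dots> = (\<integral>\<^sup>+x. \<integral>\<^sup>+y. g2 (x, y) \<partial>lborel \<partial>lborel)" by (rule shear_x) measurable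
  also have "\<dots> = (\<integral>\<^sup>+x. \<integral>\<^sup>+y. g1 (x, y + k2 * x) \<partial>lborel \<partial>lborel)" unfolding g2_def by simp
  also have "\<dots> = (\<integral>\<^sup>+x. \<integral>\<^sup>+y. g1 (x, y) \<partial>lborel \<partial>lborel)" by (rule shear_y) measurable
  also have "\<dots> = (\<integral>\<^sup>+x. \<integral>\<^sup>+y. h (x + k1 * y, y) \<partial>lborel \<partial>lborel)" unfolding g1_def by simp
  also have "\<dots> = (\<integral>\<^sup>+x. \<integral>\<^sup>+y. h (x, y) \<partial>lborel \<partial>lborel)" by (rule shear_x) measurable
  finally show ?thesis .
qed

definition I4 :: "(real \<times> real \<times> real \<times> real \<Rightarrow> ennreal) \<Rightarrow> ennreal" where
  "I4 K = (\<integral>\<^sup>+x1. \<integral>\<^sup>+y1. \<integral>\<^sup>+x2. \<integral>\<^sup>+y2. K (x1, y1, x2, y2) \<partial>lborel \<partial>lborel \<partial>lborel \<partial>lborel)"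

abbreviation L4 where "L4 \<equiv> lborel \<Otimes>\<^sub>M lborel \<Otimes>\<^sub>M lborel \<Otimes>\<^sub>M (lborel::real measure)"

lemma rot4:
  fixes K :: "real \<times> real \<times> real \<times> real \<Rightarrow> ennreal" and C S :: real
  assumes [measurable]: "K \<in> borel_measurable L4"
  assumes CS: "C\<^sup>2 + S\<^sup>2 = 1" and C: "C > -1"
  shows "I4 (\<lambda>(x1, y1, x2, y2). K (C * x1 + S * y1, - S * x1 + C * y1, C * x2 + S * y2, - S * x2 + C * y2)) = I4 K"
proof -
  have inner: "(\<integral>\<^sup>+x2. \<integral>\<^sup>+y2. K (u, v, C * x2 + S * y2, - S * x2 + C * y2) \<partial>lborel \<partial>lborel)
     = (\<integral>\<^sup>+x2. \<integral>\<^sup>+y2. K (u, v, x2, y2) \<partial>lborel \<partial>lborel)" for u v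
    using rot_inv[of "\<lambda>p. K (u, v, fst p, snd p)", OF _ CS C] by simp
  define H where "H p = (\<integral>\<^sup>+x2. \<integral>\<^sup>+y2. K (fst p, snd p, x2, y2) \<partial>lborel \<partial>lborel)" for p
  have [measurable]: "H \<in> borel_measurable (lborel \<Otimes>\<^sub>M lborel)" unfolding H_def by measurable
  have "I4 (\<lambda>(x1, y1, x2, y2). K (C * x1 + S * y1, - S * x1 + C * y1, C * x2 + S * y2, - S * x2 + C * y2))
      = (\<integral>\<^sup>+x1. \<integral>\<^sup>+y1. H (C * x1 + S * y1, - S * x1 + C * y1) \<partial>lborel \<partial>lborel)"
    unfolding I4_def H_def by (simp only: fst_conv snd_conv prod.case inner)
  also have "\<dots> = (\<integral>\<^sup>+x1. \<integral>\<^sup>+y1. H (x1, y1) \<partial>lborel \<partial>lborel)"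
    by (rule rot_inv[OF _ CS C]) measurable
  also have "\<dots> = I4 K" unfolding I4_def H_def by simp
  finally show ?thesis .
qed

lemma sets_L2: "sets (lborel \<Otimes>\<^sub>M lborel) = sets (borel \<Otimes>\<^sub>M (borel::real measure))"
  by (intro sets_pair_measure_cong) simp_all

lemma sf_L2: "sigma_finite_measure (lborel \<Otimes>\<^sub>M (lborel::real measure))"
  by (intro sigma_finite_pair_measure) (simp_all add: lborel.sigma_finite_measure_axioms)

lemma reorder:
  fixes F :: "real \<times> real \<times> real \<times> real \<Rightarrow> ennreal"
  assumes [measurable]: "F \<in> borel_measurable L4"
  shows "(\<integral>\<^sup>+x1. \<integral>\<^sup>+y2. \<integral>\<^sup>+x2. \<integral>\<^sup>+y1. F (x1, y1, x2, y2) \<partial>lborel \<partial>lborel \<partial>lborel \<partial>lborel) = I4 F"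
  unfolding I4_def
proof (rule nn_integral_cong)
  fix x1 :: real
  have "(\<integral>\<^sup>+y2. \<integral>\<^sup>+x2. \<integral>\<^sup>+y1. F (x1, y1, x2, y2) \<partial>lborel \<partial>lborel \<partial>lborel)
     = (\<integral>\<^sup>+y2. \<integral>\<^sup>+y1. \<integral>\<^sup>+x2. F (x1, y1, x2, y2) \<partial>lborel \<partial>lborel \<partial>lborel)"
  proof (rule nn_integral_cong)
    fix y2 :: real
    show "(\<integral>\<^sup>+x2. \<integral>\<^sup>+y1. F (x1, y1, x2, y2) \<partial>lborel \<partial>lborel) = (\<integral>\<^sup>+y1. \<integral>\<^sup>+x2. F (x1, y1, x2, y2) \<partial>lborel \<partial>lborel)"
      by (rule lborel_pair.Fubini') measurable
  qed
  also have "\<dots> = (\<integral>\<^sup>+y1. \<integral>\<^sup>+y2. \<integral>\<^sup>+x2. F (x1, y1, x2, y2) \<partial>lborel \<partial>lborel \<partial>lborel)"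
    by (rule lborel_pair.Fubini') measurable
  also have "\<dots> = (\<integral>\<^sup>+y1. \<integral>\<^sup>+x2. \<integral>\<^sup>+y2. F (x1, y1, x2, y2) \<partial>lborel \<partial>lborel \<partial>lborel)"
  proof (rule nn_integral_cong)
    fix y1 :: real
    show "(\<integral>\<^sup>+y2. \<integral>\<^sup>+x2. F (x1, y1, x2, y2) \<partial>lborel \<partial>lborel) = (\<integral>\<^sup>+x2. \<integral>\<^sup>+y2. F (x1, y1, x2, y2) \<partial>lborel \<partial>lborel)"
      by (rule lborel_pair.Fubini') measurable
  qed
  finally show "(\<integral>\<^sup>+y2. \<integral>\<^sup>+x2. \<integral>\<^sup>+y1. F (x1, y1, x2, y2) \<partial>lborel \<partial>lborel \<partial>lborel)
     = (\<integral>\<^sup>+y1. \<integral>\<^sup>+x2. \<integral>\<^sup>+y2. F (x1, y1, x2, y2) \<partial>lborel \<partial>lborel \<partial>lborel)" .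
qed

lemma joint_I4:
  fixes M :: "'a measure" and X1 X2 Y1 Y2 :: "'a \<Rightarrow> real" and f1 f2 :: "real \<times> real \<Rightarrow> ennreal"
    and g :: "real \<times> real \<times> real \<times> real \<Rightarrow> ennreal"
  assumes P: "prob_space M"
    and D1: "distributed M (lborel \<Otimes>\<^sub>M lborel) (\<lambda>\<omega>. (X1 \<omega>, Y2 \<omega>)) f1"
    and D2: "distributed M (lborel \<Otimes>\<^sub>M lborel) (\<lambda>\<omega>. (X2 \<omega>, Y1 \<omega>)) f2"
    and ind: "prob_space.indep_var M (borel \<Otimes>\<^sub>M borel) (\<lambda>\<omega>. (X1 \<omega>, Y2 \<omega>))
           (borel \<Otimes>\<^sub>M borel) (\<lambda>\<omega>. (X2 \<omega>, Y1 \<omega>))"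
    and g[measurable]: "g \<in> borel_measurable L4"
  shows "(\<integral>\<^sup>+\<omega>. g (X1 \<omega>, Y1 \<omega>, X2 \<omega>, Y2 \<omega>) \<partial>M)
       = I4 (\<lambda>(x1, y1, x2, y2). f1 (x1, y2) * f2 (x2, y1) * g (x1, y1, x2, y2))"
proof -
  interpret prob_space M by (rule P)
  have [measurable]: "f1 \<in> borel_measurable (lborel \<Otimes>\<^sub>M lborel)" "f2 \<in> borel_measurable (lborel \<Otimes>\<^sub>M lborel)"
    using D1 D2 by (simp_all add: distributed_borel_measurable)
  have ind': "indep_var (lborel \<Otimes>\<^sub>M lborel) (\<lambda>\<omega>. (X1 \<omega>, Y2 \<omega>)) (lborel \<Otimes>\<^sub>M lborel) (\<lambda>\<omega>. (X2 \<omega>, Y1 \<omega>))"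
    using ind unfolding indep_var_eq by (simp add: sets_L2 measurable_cong_sets[OF refl sets_L2])
  have J: "distributed M ((lborel \<Otimes>\<^sub>M lborel) \<Otimes>\<^sub>M (lborel \<Otimes>\<^sub>M lborel)) (\<lambda>\<omega>. ((X1 \<omega>, Y2 \<omega>), (X2 \<omega>, Y1 \<omega>)))
      (\<lambda>(p, q). f1 p * f2 q)"
    by (rule distributed_joint_indep[OF sf_L2 sf_L2 D1 D2 ind'])
  define G where "G w = g (fst (fst w), snd (snd w), fst (snd w), snd (fst w))" for w :: "(real \<times> real) \<times> (real \<times> real)"
  have [measurable]: "G \<in> borel_measurable ((lborel \<Otimes>\<^sub>M lborel) \<Otimes>\<^sub>M (lborel \<Otimes>\<^sub>M lborel))"
    unfolding G_def by measurable
  have "(\<integral>\<^sup>+\<omega>. g (X1 \<omega>, Y1 \<omega>, X2 \<omega>, Y2 \<omega>) \<partial>M) = (\<integral>\<^sup>+\<omega>. G ((X1 \<omega>, Y2 \<omega>), (X2 \<omega>, Y1 \<omega>)) \<partial>M)"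
    unfolding G_def by simp
  also have "\<dots> = (\<integral>\<^sup>+w. (\<lambda>(p, q). f1 p * f2 q) w * G w \<partial>((lborel \<Otimes>\<^sub>M lborel) \<Otimes>\<^sub>M (lborel \<Otimes>\<^sub>M lborel)))"
    by (rule distributed_nn_integral[OF J, symmetric]) measurable
  also have "\<dots> = (\<integral>\<^sup>+p. \<integral>\<^sup>+q. f1 p * f2 q * G (p, q) \<partial>(lborel \<Otimes>\<^sub>M lborel) \<partial>(lborel \<Otimes>\<^sub>M lborel))"
  proof -
    define Fw where "Fw w = (\<lambda>(p, q). f1 p * f2 q) w * G w" for w :: "(real \<times> real) \<times> (real \<times> real)"
    have [measurable]: "Fw \<in> borel_measurable ((lborel \<Otimes>\<^sub>M lborel) \<Otimes>\<^sub>M (lborel \<Otimes>\<^sub>M lborel))"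
      unfolding Fw_def by measurable
    have "(\<integral>\<^sup>+p. \<integral>\<^sup>+q. Fw (p, q) \<partial>(lborel \<Otimes>\<^sub>M lborel) \<partial>(lborel \<Otimes>\<^sub>M lborel))
        = integral\<^sup>N ((lborel \<Otimes>\<^sub>M lborel) \<Otimes>\<^sub>M (lborel \<Otimes>\<^sub>M lborel)) Fw"
      by (rule sigma_finite_measure.nn_integral_fst[OF sf_L2]) measurable
    then show ?thesis unfolding Fw_def by simp
  qed
  also have "\<dots> = (\<integral>\<^sup>+x1. \<integral>\<^sup>+y2. \<integral>\<^sup>+x2. \<integral>\<^sup>+y1. f1 (x1, y2) * f2 (x2, y1) * g (x1, y1, x2, y2) \<partial>lborel \<partial>lborel \<partial>lborel \<partial>lborel)"
  proof -
    have "(\<integral>\<^sup>+q. f1 p * f2 q * G (p, q) \<partial>(lborel \<Otimes>\<^sub>M lborel)) = (\<integral>\<^sup>+x2. \<integral>\<^sup>+y1. f1 p * f2 (x2, y1) * G (p, (x2, y1)) \<partial>lborel \<partial>lborel)" for p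
      by (rule lborel.nn_integral_fst[symmetric]) (measurable, auto simp: space_pair_measure)
    then have "(\<integral>\<^sup>+p. \<integral>\<^sup>+q. f1 p * f2 q * G (p, q) \<partial>(lborel \<Otimes>\<^sub>M lborel) \<partial>(lborel \<Otimes>\<^sub>M lborel))
       = (\<integral>\<^sup>+p. \<integral>\<^sup>+x2. \<integral>\<^sup>+y1. f1 p * f2 (x2, y1) * G (p, (x2, y1)) \<partial>lborel \<partial>lborel \<partial>(lborel \<Otimes>\<^sub>M lborel))"
      by simp
    also have "\<dots> = (\<integral>\<^sup>+x1. \<integral>\<^sup>+y2. \<integral>\<^sup>+x2. \<integral>\<^sup>+y1. f1 (x1, y2) * f2 (x2, y1) * G ((x1, y2), (x2, y1)) \<partial>lborel \<partial>lborel \<partial>lborel \<partial>lborel)"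
      by (rule lborel.nn_integral_fst[symmetric]) measurable
    finally show ?thesis unfolding G_def by simp
  qed
  also have "\<dots> = I4 (\<lambda>(x1, y1, x2, y2). f1 (x1, y2) * f2 (x2, y1) * g (x1, y1, x2, y2))"
    apply (subst reorder[symmetric])
    subgoal by measurable
    subgoal by simp
    done
  finally show ?thesis .
qed

lemma I4_cmult:
  fixes F :: "real \<times> real \<times> real \<times> real \<Rightarrow> ennreal"
  assumes [measurable]: "F \<in> borel_measurable L4"
  shows "I4 (\<lambda>w. c * F w) = c * I4 F"
  unfolding I4_def by (simp add: nn_integral_cmult)

lemma I4_swap:
  fixes \<Phi> :: "real \<Rightarrow> real \<times> real \<times> real \<times> real \<Rightarrow> ennreal"
  assumes [measurable]: "case_prod \<Phi> \<in> borel_measurable (lborel \<Otimes>\<^sub>M L4)"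
  shows "(\<integral>\<^sup>+t. I4 (\<Phi> t) \<partial>lborel) = I4 (\<lambda>w. \<integral>\<^sup>+t. \<Phi> t w \<partial>lborel)"
  unfolding I4_def
proof -
  have "(\<integral>\<^sup>+t. \<integral>\<^sup>+x1. \<integral>\<^sup>+y1. \<integral>\<^sup>+x2. \<integral>\<^sup>+y2. \<Phi> t (x1, y1, x2, y2) \<partial>lborel \<partial>lborel \<partial>lborel \<partial>lborel \<partial>lborel)
     = (\<integral>\<^sup>+x1. \<integral>\<^sup>+t. \<integral>\<^sup>+y1. \<integral>\<^sup>+x2. \<integral>\<^sup>+y2. \<Phi> t (x1, y1, x2, y2) \<partial>lborel \<partial>lborel \<partial>lborel \<partial>lborel \<partial>lborel)"
    by (rule lborel_pair.Fubini') measurable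
  also have "\<dots> = (\<integral>\<^sup>+x1. \<integral>\<^sup>+y1. \<integral>\<^sup>+t. \<integral>\<^sup>+x2. \<integral>\<^sup>+y2. \<Phi> t (x1, y1, x2, y2) \<partial>lborel \<partial>lborel \<partial>lborel \<partial>lborel \<partial>lborel)"
    by (intro nn_integral_cong lborel_pair.Fubini') measurable
  also have "\<dots> = (\<integral>\<^sup>+x1. \<integral>\<^sup>+y1. \<integral>\<^sup>+x2. \<integral>\<^sup>+t. \<integral>\<^sup>+y2. \<Phi> t (x1, y1, x2, y2) \<partial>lborel \<partial>lborel \<partial>lborel \<partial>lborel \<partial>lborel)"
    by (intro nn_integral_cong lborel_pair.Fubini') measurable
  also have "\<dots> = (\<integral>\<^sup>+x1. \<integral>\<^sup>+y1. \<integral>\<^sup>+x2. \<integral>\<^sup>+y2. \<integral>\<^sup>+t. \<Phi> t (x1, y1, x2, y2) \<partial>lborel \<partial>lborel \<partial>lborel \<partial>lborel \<partial>lborel)"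
    by (intro nn_integral_cong lborel_pair.Fubini') measurable
  finally show "(\<integral>\<^sup>+t. \<integral>\<^sup>+x1. \<integral>\<^sup>+y1. \<integral>\<^sup>+x2. \<integral>\<^sup>+y2. \<Phi> t (x1, y1, x2, y2) \<partial>lborel \<partial>lborel \<partial>lborel \<partial>lborel \<partial>lborel)
     = (\<integral>\<^sup>+x1. \<integral>\<^sup>+y1. \<integral>\<^sup>+x2. \<integral>\<^sup>+y2. \<integral>\<^sup>+t. \<Phi> t (x1, y1, x2, y2) \<partial>lborel \<partial>lborel \<partial>lborel \<partial>lborel \<partial>lborel)" .
qed

lemma I4_AE:
  fixes F G :: "real \<times> real \<times> real \<times> real \<Rightarrow> ennreal"
  assumes "\<And>x1 y1 x2 y2. y1 \<noteq> 0 \<Longrightarrow> y2 \<noteq> 0 \<Longrightarrow> F (x1, y1, x2, y2) = G (x1, y1, x2, y2)"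
  shows "I4 F = I4 G"
  unfolding I4_def
proof (rule nn_integral_cong)
  fix x1
  show "(\<integral>\<^sup>+y1. \<integral>\<^sup>+x2. \<integral>\<^sup>+y2. F (x1, y1, x2, y2) \<partial>lborel \<partial>lborel \<partial>lborel) = (\<integral>\<^sup>+y1. \<integral>\<^sup>+x2. \<integral>\<^sup>+y2. G (x1, y1, x2, y2) \<partial>lborel \<partial>lborel \<partial>lborel)"
  proof (rule nn_integral_cong_AE)
    show "AE y1 in lborel. (\<integral>\<^sup>+x2. \<integral>\<^sup>+y2. F (x1, y1, x2, y2) \<partial>lborel \<partial>lborel) = (\<integral>\<^sup>+x2. \<integral>\<^sup>+y2. G (x1, y1, x2, y2) \<partial>lborel \<partial>lborel)"
      using AE_lborel_singleton[of 0]
    proof (rule eventually_mono)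
      fix y1 :: real assume y1: "y1 \<noteq> 0"
      show "(\<integral>\<^sup>+x2. \<integral>\<^sup>+y2. F (x1, y1, x2, y2) \<partial>lborel \<partial>lborel) = (\<integral>\<^sup>+x2. \<integral>\<^sup>+y2. G (x1, y1, x2, y2) \<partial>lborel \<partial>lborel)"
      proof (rule nn_integral_cong)
        fix x2
        show "(\<integral>\<^sup>+y2. F (x1, y1, x2, y2) \<partial>lborel) = (\<integral>\<^sup>+y2. G (x1, y1, x2, y2) \<partial>lborel)"
          using AE_lborel_singleton[of 0] by (intro nn_integral_cong_AE) (rule eventually_mono, use assms y1 in auto)
      qed
    qed
  qed
qed

definition EE :: "real \<Rightarrow> real \<times> real \<times> real \<times> real \<Rightarrow> real" where
  "EE \<rho> w = (case w of (x1, y1, x2, y2) \<Rightarrow> x1\<^sup>2 + y1\<^sup>2 + x2\<^sup>2 + y2\<^sup>2 - 2 * \<rho> * (x1 * y2 - x2 * y1))"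

lemma bd_prod:
  "binormal_density 1 \<rho> 1 (x1, y2) * binormal_density 1 (-\<rho>) 1 (x2, y1)
   = exp (- EE \<rho> (x1, y1, x2, y2) / (2 * (1 - \<rho>\<^sup>2))) / (2 * pi * sqrt (1 - \<rho>\<^sup>2))\<^sup>2"
proof -
  define d where "d = 1 - \<rho>\<^sup>2"
  have "binormal_density 1 \<rho> 1 (x1, y2) = exp (- (x1\<^sup>2 - 2 * \<rho> * x1 * y2 + y2\<^sup>2) / (2 * d)) / (2 * pi * sqrt d)"
    by (simp add: binormal_density_def d_def)
  moreover have "binormal_density 1 (-\<rho>) 1 (x2, y1) = exp (- (x2\<^sup>2 + 2 * \<rho> * x2 * y1 + y1\<^sup>2) / (2 * d)) / (2 * pi * sqrt d)"
    by (simp add: binormal_density_def d_def)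
  moreover have "- (x1\<^sup>2 - 2 * \<rho> * x1 * y2 + y2\<^sup>2) / (2 * d) + - (x2\<^sup>2 + 2 * \<rho> * x2 * y1 + y1\<^sup>2) / (2 * d)
      = - EE \<rho> (x1, y1, x2, y2) / (2 * d)"
    unfolding EE_def add_divide_distrib[symmetric] by (simp add: algebra_simps)
  ultimately show ?thesis
    by (simp add: d_def power2_eq_square exp_add[symmetric])
qed

lemma EE_rot:
  assumes CS: "C\<^sup>2 + S\<^sup>2 = 1"
  shows "EE \<rho> (C * x1 + S * y1, - S * x1 + C * y1, C * x2 + S * y2, - S * x2 + C * y2) = EE \<rho> (x1, y1, x2, y2)"
proof -
  have a: "(C * x + S * y)\<^sup>2 + (- S * x + C * y)\<^sup>2 = (C\<^sup>2 + S\<^sup>2) * (x\<^sup>2 + y\<^sup>2)" for x y by algebra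
  have b: "(C * x1 + S * y1) * (- S * x2 + C * y2) - (C * x2 + S * y2) * (- S * x1 + C * y1) = (C\<^sup>2 + S\<^sup>2) * (x1 * y2 - x2 * y1)" by algebra
  have "EE \<rho> (C * x1 + S * y1, - S * x1 + C * y1, C * x2 + S * y2, - S * x2 + C * y2)
      = ((C * x1 + S * y1)\<^sup>2 + (- S * x1 + C * y1)\<^sup>2) + ((C * x2 + S * y2)\<^sup>2 + (- S * x2 + C * y2)\<^sup>2)
        - 2 * \<rho> * ((C * x1 + S * y1) * (- S * x2 + C * y2) - (C * x2 + S * y2) * (- S * x1 + C * y1))"
    unfolding EE_def by simp
  also have "\<dots> = EE \<rho> (x1, y1, x2, y2)" unfolding a b CS EE_def by simp
  finally show ?thesis .
qed

lemma bd_nonneg: "-1 < \<rho> \<Longrightarrow> \<rho> < 1 \<Longrightarrow> 0 \<le> binormal_density 1 \<rho> 1 p"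
proof -
  assume "-1 < \<rho>" "\<rho> < 1"
  then have "\<rho>\<^sup>2 < 1" by (simp add: abs_square_less_1)
  then show ?thesis by (cases p) (simp add: binormal_density_def Let_def)
qed

theorem mainTheorem2:
  fixes M :: "'a measure" and X1 X2 Y1 Y2 :: "'a \<Rightarrow> real" and \<rho> w1 w2 :: real
  assumes "prob_space M"
    and "-1 < \<rho>" and "\<rho> < 1"
    and "distributed M (lborel \<Otimes>\<^sub>M lborel) (\<lambda>\<omega>. (X1 \<omega>, Y2 \<omega>))
           (\<lambda>p. ennreal (binormal_density 1 \<rho> 1 p))"
    and "distributed M (lborel \<Otimes>\<^sub>M lborel) (\<lambda>\<omega>. (X2 \<omega>, Y1 \<omega>))
           (\<lambda>p. ennreal (binormal_density 1 (-\<rho>) 1 p))"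
    and "prob_space.indep_var M (borel \<Otimes>\<^sub>M borel) (\<lambda>\<omega>. (X1 \<omega>, Y2 \<omega>))
           (borel \<Otimes>\<^sub>M borel) (\<lambda>\<omega>. (X2 \<omega>, Y1 \<omega>))"
    and "w1 \<ge> 0" and "w2 \<ge> 0" and "w1 + w2 = 1"
  shows "distributed M lborel (\<lambda>\<omega>. w1 * (X1 \<omega> / Y1 \<omega>) + w2 * (X2 \<omega> / Y2 \<omega>))
           (\<lambda>z. ennreal (std_cauchy_density z))"
proof -
  note P = assms(1) and D1 = assms(4) and D2 = assms(5) and ind = assms(6)
  note w = assms(7,8,9)
  interpret prob_space M by (rule P)
  define f1 where "f1 = (\<lambda>p. ennreal (binormal_density 1 \<rho> 1 p))"
  define f2 where "f2 = (\<lambda>p. ennreal (binormal_density 1 (-\<rho>) 1 p))"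
  have [measurable]: "f1 \<in> borel_measurable (lborel \<Otimes>\<^sub>M lborel)" "f2 \<in> borel_measurable (lborel \<Otimes>\<^sub>M lborel)"
    using D1 D2 unfolding f1_def f2_def by (simp_all add: distributed_borel_measurable)
  have m1: "(\<lambda>\<omega>. (X1 \<omega>, Y2 \<omega>)) \<in> measurable M (lborel \<Otimes>\<^sub>M lborel)"
    and m2: "(\<lambda>\<omega>. (X2 \<omega>, Y1 \<omega>)) \<in> measurable M (lborel \<Otimes>\<^sub>M lborel)"
    using D1 D2 by (simp_all add: distributed_measurable)
  have [measurable]: "X1 \<in> borel_measurable M" "Y2 \<in> borel_measurable M" "X2 \<in> borel_measurable M" "Y1 \<in> borel_measurable M"
    using m1 m2 by (simp_all add: measurable_pair_iff comp_def)
  define Z where "Z \<omega> = w1 * (X1 \<omega> / Y1 \<omega>) + w2 * (X2 \<omega> / Y2 \<omega>)" for \<omega>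
  have [measurable]: "Z \<in> borel_measurable M" unfolding Z_def by measurable
  define Zf where "Zf w = w1 * (fst w / fst (snd w)) + w2 * (fst (snd (snd w)) / snd (snd (snd w)))"
    for w :: "real \<times> real \<times> real \<times> real"
  have [measurable]: "Zf \<in> borel_measurable L4" unfolding Zf_def by measurable
  define dens where "dens w = f1 (fst w, snd (snd (snd w))) * f2 (fst (snd (snd w)), fst (snd w))"
    for w :: "real \<times> real \<times> real \<times> real"
  have [measurable]: "dens \<in> borel_measurable L4" unfolding dens_def by measurable
  have joint: "(\<integral>\<^sup>+\<omega>. g (X1 \<omega>, Y1 \<omega>, X2 \<omega>, Y2 \<omega>) \<partial>M) = I4 (\<lambda>w. dens w * g w)"
    if g[measurable]: "g \<in> borel_measurable L4" for g
  proof -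
    have "(\<integral>\<^sup>+\<omega>. g (X1 \<omega>, Y1 \<omega>, X2 \<omega>, Y2 \<omega>) \<partial>M)
       = I4 (\<lambda>(x1, y1, x2, y2). f1 (x1, y2) * f2 (x2, y1) * g (x1, y1, x2, y2))"
      using joint_I4[OF P D1[folded f1_def] D2[folded f2_def] ind g] .
    also have "(\<lambda>(x1, y1, x2, y2). f1 (x1, y2) * f2 (x2, y1) * g (x1, y1, x2, y2)) = (\<lambda>w. dens w * g w)"
      by (auto simp: dens_def fun_eq_iff split: prod.split)
    finally show ?thesis .
  qed
  have I4dens: "I4 dens = 1"
  proof -
    have "I4 dens = I4 (\<lambda>w. dens w * 1)" by simp
    also have "\<dots> = (\<integral>\<^sup>+\<omega>. 1 \<partial>M)" by (rule joint[symmetric]) measurable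
    also have "\<dots> = 1" using emeasure_space_1 by simp
    finally show ?thesis .
  qed
  have dens_eq: "dens (x1, y1, x2, y2) = ennreal (exp (- EE \<rho> (x1, y1, x2, y2) / (2 * (1 - \<rho>\<^sup>2))) / (2 * pi * sqrt (1 - \<rho>\<^sup>2))\<^sup>2)"
    for x1 y1 x2 y2
  proof -
    have "-1 < -\<rho>" "-\<rho> < 1" using assms(2,3) by simp_all
    then have "dens (x1, y1, x2, y2) = ennreal (binormal_density 1 \<rho> 1 (x1, y2) * binormal_density 1 (-\<rho>) 1 (x2, y1))"
      unfolding dens_def f1_def f2_def using bd_nonneg[OF assms(2,3)] bd_nonneg[of "-\<rho>"]
      by (simp add: ennreal_mult)
    then show ?thesis by (simp add: bd_prod)
  qed
  have Pz: "emeasure M {\<omega> \<in> space M. Z \<omega> \<le> z} = ennreal (Fc z)" for z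
  proof -
    define K where "K w = dens w * indicator {..z} (Zf w)" for w
    have [measurable]: "K \<in> borel_measurable L4" unfolding K_def by measurable
    define Gr where "Gr \<tau> w = w1 * ((fst w + \<tau> * fst (snd w)) / (fst (snd w) - \<tau> * fst w))
       + w2 * ((fst (snd (snd w)) + \<tau> * snd (snd (snd w))) / (snd (snd (snd w)) - \<tau> * fst (snd (snd w))))"
      for \<tau> :: real and w :: "real \<times> real \<times> real \<times> real"
    have [measurable]: "case_prod Gr \<in> borel_measurable (lborel \<Otimes>\<^sub>M L4)" unfolding Gr_def by measurable
    have e0: "emeasure M {\<omega> \<in> space M. Z \<omega> \<le> z} = I4 K"
    proof -
      have "emeasure M {\<omega> \<in> space M. Z \<omega> \<le> z} = (\<integral>\<^sup>+\<omega>. indicator {\<omega> \<in> space M. Z \<omega> \<le> z} \<omega> \<partial>M)"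
        by (rule nn_integral_indicator[symmetric]) measurable
      also have "\<dots> = (\<integral>\<^sup>+\<omega>. indicator {..z} (Zf (X1 \<omega>, Y1 \<omega>, X2 \<omega>, Y2 \<omega>)) \<partial>M)"
        by (rule nn_integral_cong) (auto simp: indicator_def Z_def Zf_def)
      also have "\<dots> = I4 K" unfolding K_def by (rule joint) measurable
      finally show ?thesis .
    qed
    have rot: "I4 K = I4 (\<lambda>w. dens w * indicator {..z} (Gr \<tau> w))" for \<tau>
    proof -
      define r where "r = sqrt (1 + \<tau>\<^sup>2)"
      have r: "r > 0" "r\<^sup>2 = 1 + \<tau>\<^sup>2" unfolding r_def by (simp_all add: sqrt1p_pos add_pos_nonneg)
      define C where "C = 1 / r"
      define S where "S = \<tau> / r"
      have t1: "1 + \<tau>\<^sup>2 > 0" by (simp add: add_pos_nonneg)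
      have CS: "C\<^sup>2 + S\<^sup>2 = 1" using r t1 unfolding C_def S_def by (simp add: power_divide add_divide_distrib[symmetric])
      have C: "C > -1" using r unfolding C_def by (smt (verit) divide_pos_pos)
      have lin: "C * x + S * y = (x + \<tau> * y) / r" "- S * x + C * y = (y - \<tau> * x) / r" for x y
        unfolding C_def S_def using r by (simp_all add: field_simps)
      have pt: "K (C * x1 + S * y1, - S * x1 + C * y1, C * x2 + S * y2, - S * x2 + C * y2)
          = dens (x1, y1, x2, y2) * indicator {..z} (Gr \<tau> (x1, y1, x2, y2))" for x1 y1 x2 y2
      proof -
        have "dens (C * x1 + S * y1, - S * x1 + C * y1, C * x2 + S * y2, - S * x2 + C * y2) = dens (x1, y1, x2, y2)"
          unfolding dens_eq EE_rot[OF CS] ..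
        moreover have "Zf (C * x1 + S * y1, - S * x1 + C * y1, C * x2 + S * y2, - S * x2 + C * y2) = Gr \<tau> (x1, y1, x2, y2)"
          unfolding Zf_def Gr_def fst_conv snd_conv lin using r by (simp add: div_div_same)
        ultimately show ?thesis unfolding K_def by simp
      qed
      have "I4 (\<lambda>(x1, y1, x2, y2). K (C * x1 + S * y1, - S * x1 + C * y1, C * x2 + S * y2, - S * x2 + C * y2)) = I4 K"
        by (rule rot4[OF _ CS C]) measurable
      moreover have "(\<lambda>(x1, y1, x2, y2). K (C * x1 + S * y1, - S * x1 + C * y1, C * x2 + S * y2, - S * x2 + C * y2))
          = (\<lambda>w. dens w * indicator {..z} (Gr \<tau> w))"
      proof (rule ext)
        fix w :: "real \<times> real \<times> real \<times> real"
        obtain x1 y1 x2 y2 where wd: "w = (x1, y1, x2, y2)" by (cases w) auto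
        show "(\<lambda>(x1, y1, x2, y2). K (C * x1 + S * y1, - S * x1 + C * y1, C * x2 + S * y2, - S * x2 + C * y2)) w
          = dens w * indicator {..z} (Gr \<tau> w)"
          unfolding wd by (simp only: prod.case pt)
      qed
      ultimately show ?thesis by simp
    qed
    have cd1: "(\<integral>\<^sup>+\<tau>. ennreal (std_cauchy_density \<tau>) \<partial>lborel) = 1"
      using muC_space by (simp add: emeasure_density)
    have inner': "(\<integral>\<^sup>+\<tau>. ennreal (std_cauchy_density \<tau>) * (dens w * indicator {..z} (Gr \<tau> w)) \<partial>lborel)
        = dens w * ennreal (Fc z)" if "fst (snd w) \<noteq> 0" "snd (snd (snd w)) \<noteq> 0" for w
    proof -
      obtain x1 y1 x2 y2 where wd: "w = (x1, y1, x2, y2)" by (cases w) auto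
      have y: "y1 \<noteq> 0" "y2 \<noteq> 0" using that wd by simp_all
      have [measurable]: "(\<lambda>\<tau>. Gr \<tau> w) \<in> borel_measurable lborel" unfolding Gr_def by measurable
      have "(\<integral>\<^sup>+\<tau>. ennreal (std_cauchy_density \<tau>) * (dens w * indicator {..z} (Gr \<tau> w)) \<partial>lborel)
          = dens w * (\<integral>\<^sup>+\<tau>. ennreal (std_cauchy_density \<tau>) * indicator {..z} (Gr \<tau> w) \<partial>lborel)"
      proof -
        have "(\<integral>\<^sup>+\<tau>. dens w * (ennreal (std_cauchy_density \<tau>) * indicator {..z} (Gr \<tau> w)) \<partial>lborel)
          = dens w * (\<integral>\<^sup>+\<tau>. ennreal (std_cauchy_density \<tau>) * indicator {..z} (Gr \<tau> w) \<partial>lborel)"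
          by (rule nn_integral_cmult) measurable
        then show ?thesis by (simp add: ac_simps)
      qed
      also have "(\<integral>\<^sup>+\<tau>. ennreal (std_cauchy_density \<tau>) * indicator {..z} (Gr \<tau> w) \<partial>lborel)
          = emeasure muC {\<tau>. Gr \<tau> w \<le> z}"
        by (subst emeasure_density) (measurable, auto intro!: nn_integral_cong simp: indicator_def)
      also have "\<dots> = ennreal (Fc z)"
        unfolding wd Gr_def fst_conv snd_conv by (rule inner) (use w y in auto)
      finally show ?thesis .
    qed
    have "I4 K = (\<integral>\<^sup>+\<tau>. ennreal (std_cauchy_density \<tau>) * I4 K \<partial>lborel)"
      by (subst nn_integral_multc) (simp_all add: cd1)
    also have "\<dots> = (\<integral>\<^sup>+\<tau>. I4 (\<lambda>w. ennreal (std_cauchy_density \<tau>) * (dens w * indicator {..z} (Gr \<tau> w))) \<partial>lborel)"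
      by (intro nn_integral_cong) (subst I4_cmult, measurable, simp add: rot[symmetric])
    also have "\<dots> = I4 (\<lambda>w. \<integral>\<^sup>+\<tau>. ennreal (std_cauchy_density \<tau>) * (dens w * indicator {..z} (Gr \<tau> w)) \<partial>lborel)"
      by (rule I4_swap) measurable
    also have "\<dots> = I4 (\<lambda>w. ennreal (Fc z) * dens w)"
      by (rule I4_AE) (simp add: inner' mult.commute)
    also have "\<dots> = ennreal (Fc z)" by (simp add: I4_cmult I4dens)
    finally show ?thesis using e0 by simp
  qed
  have distrZ: "distr M lborel Z = muC"
  proof (rule cdf_unique)
    show "real_distribution (distr M lborel Z)"
      unfolding real_distribution_def real_distribution_axioms_def
      by (auto intro!: prob_space_distr)
    show "real_distribution muC" by (rule real_distribution_muC)
    show "cdf (distr M lborel Z) = cdf muC"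
    proof
      fix x
      have "measure (distr M lborel Z) {..x} = measure M (Z -` {..x} \<inter> space M)"
        by (rule measure_distr) auto
      also have "Z -` {..x} \<inter> space M = {\<omega> \<in> space M. Z \<omega> \<le> x}" by auto
      also have "measure M \<dots> = Fc x" using Pz[of x] Fc_pos[of x] by (simp add: measure_def)
      finally have 1: "measure (distr M lborel Z) {..x} = Fc x" .
      have 2: "measure muC {..x} = Fc x" using muC_Iic[of x] Fc_pos[of x] by (simp add: measure_def)
      show "cdf (distr M lborel Z) x = cdf muC x" unfolding cdf_def 1 2 ..
    qed
  qed
  show ?thesis
    unfolding distributed_def Z_def[symmetric]
    using distrZ by simp
qed

end
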